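(* For every pure context $F$, terms $t_0,t_1$ and variable $x\notin\mathrm{fv}(F)$, we have $F[(\lambda x.t_0)\,t_1] \sim (\lambda x.F[t_0])\,t_1$.
   Context: The calculus $\lambda_{\mathcal S}$. Terms: $t ::= x \mid \lambda x.t \mid t\,t \mid \mathcal{S}k.t \mid \langle t\rangle$ (shift and reset); values: $v ::= \lambda x.t \mid x$. $\lambda x.t$ binds $x$, $\mathcal{S}k.t$ binds $k$; terms up to $\alpha$-conversion; $\mathrm{fv}$ free variables; capture-avoiding substitution $t\{v/x\}$. Pure contexts $F ::= [\,] \mid v\,F \mid F\,t$ (free variables of a context are those of its subterms); evaluation contexts $E ::= [\,] \mid v\,E \mid E\,t \mid \langle E\rangle$. Reduction: $E[(\lambda x.t)\,v] \to E[t\{v/x\}]$; $E[\langle F[\mathcal{S}k.t]\rangle] \to E[\langle t\{\lambda x.\langle F[x]\rangle/k\}\rangle]$ ($x\notin\mathrm{fv}(F)$); $E[\langle v\rangle]\to E[v]$. $t\Downarrow t'$ iff $t\to^*t'$ and $t'$ irreducible. Normal forms: values, control stuck terms $F[\mathcal{S}k.t]$, and open stuck terms $E[x\,v]$. Fresh: not free in the terms/contexts considered. Normal form bisimilarity $\sim$: for a relation $\mathcal R$ on terms, $E_0\mathrel{\mathcal R}E_1$ iff either $E_0=E_0'[\langle F_0\rangle]$, $E_1=E_1'[\langle F_1\rangle]$ ($F_i$ pure) with $E_0'[x]\mathrel{\mathcal R}E_1'[x]$ and $\langle F_0[x]\rangle\mathrel{\mathcal R}\langle F_1[x]\rangle$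 ($x$ fresh), or $E_0=F_0$, $E_1=F_1$ pure with $F_0[x]\mathrel{\mathcal R}F_1[x]$ ($x$ fresh). $v\mathbin{@}y$ is $x\,y$ if $v=x$, $t\{y/x\}$ if $v=\lambda x.t$. $\mathcal R^{\mathrm{nf}}$ on normal forms: $v_0\mathrel{\mathcal R^{\mathrm{nf}}}v_1$ if $v_0\mathbin{@}x\mathrel{\mathcal R}v_1\mathbin{@}x$ ($x$ fresh); $F_0[\mathcal{S}k.t_0]\mathrel{\mathcal R^{\mathrm{nf}}}F_1[\mathcal{S}k.t_1]$ if $F_0\mathrel{\mathcal R}F_1$ and $\langle t_0\rangle\mathrel{\mathcal R}\langle t_1\rangle$; $E_0[x\,v_0]\mathrel{\mathcal R^{\mathrm{nf}}}E_1[x\,v_1]$ if $E_0\mathrel{\mathcal R}E_1$ and $v_0\mathrel{\mathcal R^{\mathrm{nf}}}v_1$. $\mathcal R$ is a normal form simulation if $t_0\mathrel{\mathcal R}t_1$ and $t_0\Downarrow t_0'$ imply $t_1\Downarrow t_1'$ with $t_0'\mathrel{\mathcal R^{\mathrm{nf}}}t_1'$; a bisimulation if $\mathcal R$ and $\mathcal R^{-1}$ are simulations; $\sim$ is the largest normal form bisimulation. *)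

theory Defs
  imports Main
begin

text \<open>Terms of lambda_S up to alpha-conversion, represented with de Bruijn indices.
  Var i is a variable (bound if i points to an enclosing binder, free otherwise);
  Lam t is lambda x.t and Sft t is S k.t (both bind index 0 in t); Rst t is the reset.\<close>

datatype trm = Var nat | Lam trm | App trm trm | Sft trm | Rst trm

fun lift :: "nat \<Rightarrow> trm \<Rightarrow> trm" where
  "lift k (Var i) = (if i < k then Var i else Var (Suc i))"
| "lift k (Lam t) = Lam (lift (Suc k) t)"
| "lift k (App s t) = App (lift k s) (lift k t)"
| "lift k (Sft t) = Sft (lift (Suc k) t)"
| "lift k (Rst t) = Rst (lift k t)"

fun subst :: "trm \<Rightarrow> nat \<Rightarrow> trm \<Rightarrow> trm" where
  "subst (Var i) k s = (if k < i then Var (i - 1) else if i = k then s else Var i)"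
| "subst (Lam t) k s = Lam (subst t (Suc k) (lift 0 s))"
| "subst (App t u) k s = App (subst t k s) (subst u k s)"
| "subst (Sft t) k s = Sft (subst t (Suc k) (lift 0 s))"
| "subst (Rst t) k s = Rst (subst t k s)"

fun fv :: "trm \<Rightarrow> nat set" where
  "fv (Var i) = {i}"
| "fv (Lam t) = {i. Suc i \<in> fv t}"
| "fv (App s t) = fv s \<union> fv t"
| "fv (Sft t) = {i. Suc i \<in> fv t}"
| "fv (Rst t) = fv t"

fun is_val :: "trm \<Rightarrow> bool" where
  "is_val (Var _) = True"
| "is_val (Lam _) = True"
| "is_val _ = False"

datatype ctx = Hole | CAppR trm ctx | CAppL ctx trm | CRst ctx

fun plug :: "ctx \<Rightarrow> trm \<Rightarrow> trm" where
  "plug Hole t = t"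
| "plug (CAppR v E) t = App v (plug E t)"
| "plug (CAppL E u) t = App (plug E t) u"
| "plug (CRst E) t = Rst (plug E t)"

fun ccomp :: "ctx \<Rightarrow> ctx \<Rightarrow> ctx" where
  "ccomp Hole G = G"
| "ccomp (CAppR v E) G = CAppR v (ccomp E G)"
| "ccomp (CAppL E u) G = CAppL (ccomp E G) u"
| "ccomp (CRst E) G = CRst (ccomp E G)"

fun liftc :: "nat \<Rightarrow> ctx \<Rightarrow> ctx" where
  "liftc k Hole = Hole"
| "liftc k (CAppR v E) = CAppR (lift k v) (liftc k E)"
| "liftc k (CAppL E u) = CAppL (liftc k E) (lift k u)"
| "liftc k (CRst E) = CRst (liftc k E)"

fun fvc :: "ctx \<Rightarrow> nat set" where
  "fvc Hole = {}"
| "fvc (CAppR v E) = fv v \<union> fvc E"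
| "fvc (CAppL E u) = fvc E \<union> fv u"
| "fvc (CRst E) = fvc E"

fun pure :: "ctx \<Rightarrow> bool" where
  "pure Hole = True"
| "pure (CAppR v F) = (is_val v \<and> pure F)"
| "pure (CAppL F u) = pure F"
| "pure (CRst _) = False"

fun evctx :: "ctx \<Rightarrow> bool" where
  "evctx Hole = True"
| "evctx (CAppR v E) = (is_val v \<and> evctx E)"
| "evctx (CAppL E u) = evctx E"
| "evctx (CRst E) = evctx E"

inductive step :: "trm \<Rightarrow> trm \<Rightarrow> bool" where
  beta: "evctx E \<Longrightarrow> is_val v \<Longrightarrow> step (plug E (App (Lam t) v)) (plug E (subst t 0 v))"
| shift: "evctx E \<Longrightarrow> pure F \<Longrightarrow>
    step (plug E (Rst (plug F (Sft t))))
         (plug E (Rst (subst t 0 (Lam (Rst (plug (liftc 0 F) (Var 0)))))))"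
| reset: "evctx E \<Longrightarrow> is_val v \<Longrightarrow> step (plug E (Rst v)) (plug E v)"

definition eval :: "trm \<Rightarrow> trm \<Rightarrow> bool" where
  "eval t t' \<longleftrightarrow> step\<^sup>*\<^sup>* t t' \<and> (\<nexists>u. step t' u)"

fun app_at :: "trm \<Rightarrow> nat \<Rightarrow> trm" where
  "app_at (Var z) y = App (Var z) (Var y)"
| "app_at (Lam t) y = subst t 0 (Var y)"
| "app_at t y = t"

definition ctx_rel :: "(trm \<Rightarrow> trm \<Rightarrow> bool) \<Rightarrow> ctx \<Rightarrow> ctx \<Rightarrow> bool" where
  "ctx_rel R E0 E1 \<longleftrightarrow>
     (\<exists>E0' E1' F0 F1 x. evctx E0' \<and> evctx E1' \<and> pure F0 \<and> pure F1 \<and>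
        E0 = ccomp E0' (CRst F0) \<and> E1 = ccomp E1' (CRst F1) \<and>
        x \<notin> fvc E0 \<and> x \<notin> fvc E1 \<and>
        R (plug E0' (Var x)) (plug E1' (Var x)) \<and>
        R (Rst (plug F0 (Var x))) (Rst (plug F1 (Var x))))
   \<or> (pure E0 \<and> pure E1 \<and>
        (\<exists>x. x \<notin> fvc E0 \<and> x \<notin> fvc E1 \<and> R (plug E0 (Var x)) (plug E1 (Var x))))"

definition val_rel :: "(trm \<Rightarrow> trm \<Rightarrow> bool) \<Rightarrow> trm \<Rightarrow> trm \<Rightarrow> bool" where
  "val_rel R v0 v1 \<longleftrightarrow> is_val v0 \<and> is_val v1 \<and>
     (\<exists>x. x \<notin> fv v0 \<and> x \<notin> fv v1 \<and> R (app_at v0 x) (app_at v1 x))"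

definition nf_rel :: "(trm \<Rightarrow> trm \<Rightarrow> bool) \<Rightarrow> trm \<Rightarrow> trm \<Rightarrow> bool" where
  "nf_rel R a b \<longleftrightarrow>
     val_rel R a b
   \<or> (\<exists>F0 F1 t0 t1. pure F0 \<and> pure F1 \<and> a = plug F0 (Sft t0) \<and> b = plug F1 (Sft t1) \<and>
        ctx_rel R F0 F1 \<and> R (Rst t0) (Rst t1))
   \<or> (\<exists>E0 E1 x v0 v1. evctx E0 \<and> evctx E1 \<and>
        a = plug E0 (App (Var x) v0) \<and> b = plug E1 (App (Var x) v1) \<and>
        ctx_rel R E0 E1 \<and> val_rel R v0 v1)"

definition nf_sim :: "(trm \<Rightarrow> trm \<Rightarrow> bool) \<Rightarrow> bool" where
  "nf_sim R \<longleftrightarrow> (\<forall>t0 t1 t0'. R t0 t1 \<longrightarrow> eval t0 t0' \<longrightarrow>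
                     (\<exists>t1'. eval t1 t1' \<and> nf_rel R t0' t1'))"

definition nf_bisim :: "(trm \<Rightarrow> trm \<Rightarrow> bool) \<Rightarrow> bool" where
  "nf_bisim R \<longleftrightarrow> nf_sim R \<and> nf_sim R\<inverse>\<inverse>"

text \<open>Normal form bisimilarity: the largest normal form bisimulation
  (the union of all of them, which is itself one since nf_rel is monotone).\<close>
definition nf_bisimilar :: "trm \<Rightarrow> trm \<Rightarrow> bool" (infix "\<approx>nf" 50) where
  "t0 \<approx>nf t1 \<longleftrightarrow> (\<exists>R. nf_bisim R \<and> R t0 t1)"

end

theory Submission
  imports Defs
begin

definition irr :: "trm \<Rightarrow> bool" where "irr a \<longleftrightarrow> (\<nexists>u. step a u)"

definition redex :: "trm \<Rightarrow> bool" where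
  "redex r \<longleftrightarrow> (\<exists>t v. r = App (Lam t) v \<and> is_val v) \<or> (\<exists>q. r = Rst q)"

lemma plug_ccomp[simp]: "plug (ccomp A B) t = plug A (plug B t)"
  by (induct A) auto

lemma ccomp_assoc: "ccomp (ccomp A B) C = ccomp A (ccomp B C)"
  by (induct A) auto

lemma pure_ccomp[simp]: "pure (ccomp A B) \<longleftrightarrow> pure A \<and> pure B"
  by (induct A) auto

lemma evctx_ccomp[simp]: "evctx (ccomp A B) \<longleftrightarrow> evctx A \<and> evctx B"
  by (induct A) auto

lemma pure_evctx: "pure G \<Longrightarrow> evctx G"
  by (induct G) auto

lemma fvc_ccomp[simp]: "fvc (ccomp A B) = fvc A \<union> fvc B"
  by (induct A) auto

lemma finite_fv: "finite (fv t)"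
proof (induct t)
  case (Lam t) then show ?case by (simp add: finite_vimageI[of _ Suc, simplified vimage_def])
next
  case (Sft t) then show ?case by (simp add: finite_vimageI[of _ Suc, simplified vimage_def])
qed auto

lemma finite_fvc: "finite (fvc E)"
  by (induct E) (auto simp: finite_fv)

lemma fresh: "finite (A::nat set) \<Longrightarrow> \<exists>x. x \<notin> A"
  by (meson ex_new_if_finite infinite_UNIV_nat)

lemma val_plug: "is_val (plug G u) \<Longrightarrow> G = Hole \<and> is_val u"
  by (cases G) auto

lemma plug_Lam: "plug E r = Lam s \<longleftrightarrow> E = Hole \<and> r = Lam s"
  by (cases E) auto

lemma plug_Var: "plug E r = Var s \<longleftrightarrow> E = Hole \<and> r = Var s"
  by (cases E) auto

lemma redex_not_val: "redex r \<Longrightarrow> \<not> is_val r"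
  unfolding redex_def by auto

lemma subst_lift[simp]: "subst (lift k t) k s = t"
  by (induct t arbitrary: k s) auto

fun substc :: "ctx \<Rightarrow> nat \<Rightarrow> trm \<Rightarrow> ctx" where
  "substc Hole k s = Hole"
| "substc (CAppR v E) k s = CAppR (subst v k s) (substc E k s)"
| "substc (CAppL E u) k s = CAppL (substc E k s) (subst u k s)"
| "substc (CRst E) k s = CRst (substc E k s)"

lemma subst_plug: "subst (plug G t) k s = plug (substc G k s) (subst t k s)"
  by (induct G) auto

lemma substc_liftc[simp]: "substc (liftc k G) k s = G"
  by (induct G) auto

lemma step_ctx: "step u u' \<Longrightarrow> evctx G \<Longrightarrow> step (plug G u) (plug G u')"
proof (induct rule: step.induct)
  case (beta E v t)
  then show ?case using step.beta[of "ccomp G E" v t] by simp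
next
  case (shift E F t)
  then show ?case using step.shift[of "ccomp G E" F t] by simp
next
  case (reset E v)
  then show ?case using step.reset[of "ccomp G E" v] by simp
qed

lemma redex_App: "redex (App p q) \<Longrightarrow> is_val p \<and> is_val q"
  unfolding redex_def by auto

lemma plug_not_val: "redex r \<Longrightarrow> \<not> is_val (plug E r)"
  using val_plug redex_not_val by blast

lemma decomp: "pure G \<Longrightarrow> evctx E \<Longrightarrow> plug E r = plug G u \<Longrightarrow> \<not> is_val u \<Longrightarrow> redex r \<Longrightarrow>
   \<exists>E'. E = ccomp G E' \<and> plug E' r = u"
proof (induct G arbitrary: E)
  case Hole then show ?case by auto
next
  case (CAppR v G)
  show ?case
  proof (cases E)
    case Hole
    then have "r = App v (plug G u)" using CAppR.prems by simp
    then have "is_val (plug G u)" using redex_App CAppR.prems by simp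
    then show ?thesis using val_plug CAppR.prems by blast
  next
    case (CAppR v' E')
    then show ?thesis using CAppR.prems CAppR.hyps[of E'] by auto
  next
    case (CAppL E' t)
    then have "plug E' r = v" "is_val v" using CAppR.prems by auto
    then show ?thesis using plug_not_val CAppR.prems by metis
  next
    case (CRst E') then show ?thesis using CAppR.prems by auto
  qed
next
  case (CAppL G t)
  show ?case
  proof (cases E)
    case Hole
    then have "r = App (plug G u) t" using CAppL.prems by simp
    then have "is_val (plug G u)" using redex_App CAppL.prems by simp
    then show ?thesis using val_plug CAppL.prems by blast
  next
    case (CAppR v' E')
    then have "plug G u = v'" "is_val v'" using CAppL.prems by auto
    then show ?thesis using val_plug CAppL.prems by metis
  next
    case (CAppL E' t')
    then show ?thesis using CAppL.prems CAppL.hyps[of E'] by auto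
  next
    case (CRst E') then show ?thesis using CAppL.prems by auto
  qed
next
  case (CRst G) then show ?case by simp
qed

lemma stepA: "step (plug G u) w \<Longrightarrow> pure G \<Longrightarrow> \<not> is_val u \<Longrightarrow> \<exists>u'. step u u' \<and> w = plug G u'"
proof (induct "plug G u" w rule: step.induct)
  case (beta E v t)
  then obtain E' where "E = ccomp G E'" "plug E' (App (Lam t) v) = u"
    using decomp[of G E "App (Lam t) v" u] unfolding redex_def by metis
  then show ?case using beta step.beta[of E' v t] by auto
next
  case (shift E F t)
  then obtain E' where "E = ccomp G E'" "plug E' (Rst (plug F (Sft t))) = u"
    using decomp[of G E "Rst (plug F (Sft t))" u] unfolding redex_def by metis
  then show ?case using shift step.shift[of E' F t] by auto
next
  case (reset E v)
  then obtain E' where "E = ccomp G E'" "plug E' (Rst v) = u"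
    using decomp[of G E "Rst v" u] unfolding redex_def by metis
  then show ?case using reset step.reset[of E' v] by auto
qed

lemma step_beta_unique: "step (App (Lam s) v) w \<Longrightarrow> is_val v \<Longrightarrow> w = subst s 0 v"
proof (induct "App (Lam s) v" w rule: step.induct)
  case (beta E v' t)
  then show ?case
    by (cases E) (auto dest!: val_plug simp: plug_Lam plug_Var)
next
  case (shift E F t)
  then show ?case by (cases E) (auto dest!: val_plug simp: plug_Lam plug_Var)
next
  case (reset E v')
  then show ?case by (cases E) (auto dest!: val_plug simp: plug_Lam plug_Var)
qed

lemma classify: "irr t \<Longrightarrow> is_val t \<or> (\<exists>F s. pure F \<and> t = plug F (Sft s))
   \<or> (\<exists>E x v. evctx E \<and> is_val v \<and> t = plug E (App (Var x) v))"
proof (induct t)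
  case (Var x) then show ?case by simp
next
  case (Lam t) then show ?case by simp
next
  case (Sft t) then show ?case by (intro disjI2 disjI1 exI[of _ Hole]) auto
next
  case (Rst s)
  have irs: "irr s" using Rst.prems step_ctx[of s _ "CRst Hole"] unfolding irr_def by auto
  from Rst.hyps[OF irs] show ?case
  proof (elim disjE exE conjE)
    assume "is_val s" then show ?thesis using Rst.prems step.reset[of Hole s] unfolding irr_def by auto
  next
    fix F q assume "pure F" "s = plug F (Sft q)"
    then show ?thesis using Rst.prems step.shift[of Hole F q] unfolding irr_def by auto
  next
    fix E x v assume "evctx E" "is_val v" "s = plug E (App (Var x) v)"
    then show ?thesis by (intro disjI2 exI[of _ "CRst E"]) auto
  qed
next
  case (App p q)
  have irp: "irr p" using App.prems step_ctx[of p _ "CAppL Hole q"] unfolding irr_def by auto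
  from App.hyps(1)[OF irp] show ?case
  proof (elim disjE exE conjE)
    assume vp: "is_val p"
    have irq: "irr q" using App.prems vp step_ctx[of q _ "CAppR p Hole"] unfolding irr_def by auto
    from App.hyps(2)[OF irq] show ?thesis
    proof (elim disjE exE conjE)
      assume vq: "is_val q"
      show ?thesis
      proof (cases p)
        case (Var x) then show ?thesis using vq by (intro disjI2 exI[of _ Hole]) auto
      next
        case (Lam s) then show ?thesis using vq App.prems step.beta[of Hole q s] unfolding irr_def by auto
      qed (use vp in auto)
    next
      fix F s assume "pure F" "q = plug F (Sft s)"
      then show ?thesis using vp by (intro disjI2 disjI1 exI[of _ "CAppR p F"]) auto
    next
      fix E x v assume "evctx E" "is_val v" "q = plug E (App (Var x) v)"
      then show ?thesis using vp by (intro disjI2 exI[of _ "CAppR p E"]) auto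
    qed
  next
    fix F s assume "pure F" "p = plug F (Sft s)"
    then show ?thesis by (intro disjI2 disjI1 exI[of _ "CAppL F q"]) auto
  next
    fix E x v assume "evctx E" "is_val v" "p = plug E (App (Var x) v)"
    then show ?thesis by (intro disjI2 exI[of _ "CAppL E q"]) auto
  qed
qed

lemma evctx_split: "evctx E \<Longrightarrow> pure E \<or> (\<exists>E' F. evctx E' \<and> pure F \<and> E = ccomp E' (CRst F))"
proof (induct E)
  case (CAppR v E)
  then show ?case
  proof -
    have "pure E \<or> (\<exists>E' F. evctx E' \<and> pure F \<and> E = ccomp E' (CRst F))" using CAppR by simp
    then show ?thesis
    proof
      assume "pure E" then show ?thesis using CAppR by simp
    next
      assume "\<exists>E' F. evctx E' \<and> pure F \<and> E = ccomp E' (CRst F)"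
      then obtain E' F where "evctx E'" "pure F" "E = ccomp E' (CRst F)" by blast
      then show ?thesis using CAppR by (intro disjI2 exI[of _ "CAppR v E'"] exI[of _ F]) simp
    qed
  qed
next
  case (CAppL E u)
  then show ?case
  proof -
    have "pure E \<or> (\<exists>E' F. evctx E' \<and> pure F \<and> E = ccomp E' (CRst F))" using CAppL by simp
    then show ?thesis
    proof
      assume "pure E" then show ?thesis using CAppL by simp
    next
      assume "\<exists>E' F. evctx E' \<and> pure F \<and> E = ccomp E' (CRst F)"
      then obtain E' F where "evctx E'" "pure F" "E = ccomp E' (CRst F)" by blast
      then show ?thesis using CAppL by (intro disjI2 exI[of _ "CAppL E' u"] exI[of _ F]) simp
    qed
  qed
next
  case (CRst E)
  then have "pure E \<or> (\<exists>E' F. evctx E' \<and> pure F \<and> E = ccomp E' (CRst F))" by simp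
  then show ?case
  proof
    assume "pure E" then show ?thesis by (intro disjI2 exI[of _ Hole] exI[of _ E]) simp
  next
    assume "\<exists>E' F. evctx E' \<and> pure F \<and> E = ccomp E' (CRst F)"
    then obtain E' F where "evctx E'" "pure F" "E = ccomp E' (CRst F)" by blast
    then show ?thesis by (intro disjI2 exI[of _ "CRst E'"] exI[of _ F]) simp
  qed
qed auto

lemma val_refl: "(\<And>t. Q t t) \<Longrightarrow> is_val v \<Longrightarrow> val_rel Q v v"
  unfolding val_rel_def using fresh[OF finite_fv[of v]] by auto

lemma ctx_rel_gen:
  assumes "\<And>w. Q (plug GA w) (plug GB w)" "\<And>t. Q t t" "pure GA" "pure GB" "evctx E"
  shows "ctx_rel Q (ccomp GA E) (ccomp GB E)"
proof -
  obtain x where x: "x \<notin> fvc GA \<union> fvc GB \<union> fvc E"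
    using fresh[of "fvc GA \<union> fvc GB \<union> fvc E"] finite_fvc by auto
  from evctx_split[OF assms(5)] show ?thesis
  proof (elim disjE exE conjE)
    assume "pure E" then show ?thesis unfolding ctx_rel_def using assms x by auto
  next
    fix E' F assume h: "evctx E'" "pure F" "E = ccomp E' (CRst F)"
    show ?thesis unfolding ctx_rel_def
      apply (rule disjI1)
      apply (rule exI[of _ "ccomp GA E'"], rule exI[of _ "ccomp GB E'"], rule exI[of _ F], rule exI[of _ F], rule exI[of _ x])
      using h assms x pure_evctx by (auto simp: ccomp_assoc)
  qed
qed

lemma stuck_rel:
  assumes "\<And>w. Q (plug GA w) (plug GB w)" "\<And>t. Q t t" "pure GA" "pure GB" "irr u" "\<not> is_val u"
  shows "nf_rel Q (plug GA u) (plug GB u)"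
  using classify[OF assms(5)]
proof (elim disjE exE conjE)
  assume "is_val u" then show ?thesis using assms by simp
next
  fix F s assume h: "pure F" "u = plug F (Sft s)"
  show ?thesis unfolding nf_rel_def
    apply (rule disjI2, rule disjI1)
    apply (rule exI[of _ "ccomp GA F"], rule exI[of _ "ccomp GB F"], rule exI[of _ s], rule exI[of _ s])
    using h assms ctx_rel_gen[OF assms(1-4), of F] pure_evctx by auto
next
  fix E x v assume h: "evctx E" "is_val v" "u = plug E (App (Var x) v)"
  show ?thesis unfolding nf_rel_def
    apply (rule disjI2, rule disjI2)
    apply (rule exI[of _ "ccomp GA E"], rule exI[of _ "ccomp GB E"], rule exI[of _ x], rule exI[of _ v], rule exI[of _ v])
    using h assms ctx_rel_gen[OF assms(1-4), of E] pure_evctx val_refl by auto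
qed

lemma nf_refl:
  assumes "\<And>t. Q t t" "irr a"
  shows "nf_rel Q a a"
proof (cases "is_val a")
  case True
  then have "val_rel Q a a" using val_refl assms(1) by blast
  then show ?thesis unfolding nf_rel_def by (rule disjI1)
next
  case False
  have "nf_rel Q (plug Hole a) (plug Hole a)"
    by (rule stuck_rel) (use assms False in auto)
  then show ?thesis by simp
qed

lemma sim_gen:
  assumes Qw: "\<And>w. Q (plug GA w) (plug GB w)" and Qr: "\<And>t. Q t t" and pA: "pure GA" and pB: "pure GB"
    and vp: "\<And>v. is_val v \<Longrightarrow> \<exists>c. step (plug GA v) c \<and> (\<forall>w. step (plug GA v) w \<longrightarrow> w = c)
                  \<and> step\<^sup>*\<^sup>* (plug GB v) c"
    and st: "step\<^sup>*\<^sup>* x a'" and ir: "irr a'"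
  shows "x = plug GA u \<Longrightarrow> \<exists>b'. eval (plug GB u) b' \<and> nf_rel Q a' b'"
  using st
proof (induct arbitrary: u rule: converse_rtranclp_induct)
  case base
  show ?case
  proof (cases "is_val u")
    case True
    then obtain c where "step (plug GA u) c" using vp by blast
    then have False using ir base unfolding irr_def by blast
    then show ?thesis ..
  next
    case False
    have iu: "irr u"
    proof -
      { fix u' assume "step u u'"
        then have "step (plug GA u) (plug GA u')" using step_ctx pA pure_evctx by blast
        then have False using ir base unfolding irr_def by blast }
      then show ?thesis unfolding irr_def by blast
    qed
    have ib: "irr (plug GB u)"
    proof -
      { fix w assume "step (plug GB u) w"
        then obtain u' where "step u u'" using stepA[of GB u w] False pB by blast
        then have False using iu unfolding irr_def by blast }
      then show ?thesis unfolding irr_def by blast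
    qed
    have "eval (plug GB u) (plug GB u)" using ib unfolding eval_def irr_def by blast
    moreover have "nf_rel Q a' (plug GB u)" using stuck_rel[OF Qw Qr pA pB iu False] base by simp
    ultimately show ?thesis by blast
  qed
next
  case (step y z)
  show ?case
  proof (cases "is_val u")
    case True
    then obtain c where c: "step (plug GA u) c" "\<forall>w. step (plug GA u) w \<longrightarrow> w = c" "step\<^sup>*\<^sup>* (plug GB u) c"
      using vp by blast
    have "z = c" using c(2) step(1) step(4) by blast
    then have "step\<^sup>*\<^sup>* (plug GB u) a'" using c(3) step(2) by (meson rtranclp_trans)
    then have "eval (plug GB u) a'" using ir unfolding eval_def irr_def by blast
    then show ?thesis using nf_refl[of Q a'] Qr ir by blast
  next
    case False
    then obtain u' where u': "step u u'" "z = plug GA u'" using stepA[of GA u z] step(1) step(4) pA by blast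
    then obtain b' where b': "eval (plug GB u') b'" "nf_rel Q a' b'" using step(3) by blast
    have "step (plug GB u) (plug GB u')" using step_ctx[OF u'(1)] pB pure_evctx by blast
    then have "eval (plug GB u) b'" using b'(1) unfolding eval_def by (meson converse_rtranclp_into_rtranclp)
    then show ?thesis using b'(2) by blast
  qed
qed

definition RR :: "trm \<Rightarrow> trm \<Rightarrow> bool" where
  "RR a b \<longleftrightarrow> a = b \<or> (\<exists>F s u. pure F \<and> a = plug F (App (Lam s) u) \<and> b = App (Lam (plug (liftc 0 F) s)) u)"

lemma subst_key: "subst (plug (liftc 0 F) s) 0 v = plug F (subst s 0 v)"
  by (simp add: subst_plug)

lemma beta_ctx_unique: "pure F \<Longrightarrow> is_val v \<Longrightarrow> step (plug F (App (Lam s) v)) w \<Longrightarrow> w = plug F (subst s 0 v)"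
  using stepA[of F "App (Lam s) v" w] step_beta_unique by fastforce

lemma sim_RR: "nf_sim RR"
  unfolding nf_sim_def
proof (intro allI impI)
  fix a b a' assume r: "RR a b" and ev: "eval a a'"
  show "\<exists>b'. eval b b' \<and> nf_rel RR a' b'"
  proof (cases "a = b")
    case True
    have "nf_rel RR a' a'" by (rule nf_refl) (use ev in \<open>auto simp: RR_def eval_def irr_def\<close>)
    then show ?thesis using ev True by blast
  next
    case False
    then obtain F s u where h: "pure F" "a = plug F (App (Lam s) u)" "b = App (Lam (plug (liftc 0 F) s)) u"
      using r unfolding RR_def by auto
    let ?GA = "ccomp F (CAppR (Lam s) Hole)" and ?GB = "CAppR (Lam (plug (liftc 0 F) s)) Hole"
    have "\<exists>b'. eval (plug ?GB u) b' \<and> nf_rel RR a' b'"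
    proof (rule sim_gen[where x=a])
      fix w show "RR (plug ?GA w) (plug ?GB w)" unfolding RR_def
        by (intro disjI2 exI[of _ F] exI[of _ s] exI[of _ w] conjI) (simp_all add: h)
      show "\<And>t. RR t t" unfolding RR_def by auto
      show "pure ?GA" "pure ?GB" using h by auto
      show "step\<^sup>*\<^sup>* a a'" "irr a'" using ev unfolding eval_def irr_def by auto
      show "a = plug ?GA u" using h by simp
      fix v assume v: "is_val v"
      have s1: "step (plug F (App (Lam s) v)) (plug F (subst s 0 v))"
        using step.beta[of F v s] v h(1) pure_evctx by blast
      have s2: "step (App (Lam (plug (liftc 0 F) s)) v) (plug F (subst s 0 v))"
        using step.beta[of Hole v "plug (liftc 0 F) s"] v subst_key[of F s v] by simp
      have u: "\<forall>w. step (plug F (App (Lam s) v)) w \<longrightarrow> w = plug F (subst s 0 v)"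
        using beta_ctx_unique[of F v s] v h(1) by blast
      show "\<exists>c. step (plug ?GA v) c \<and> (\<forall>w. step (plug ?GA v) w \<longrightarrow> w = c) \<and> step\<^sup>*\<^sup>* (plug ?GB v) c"
      proof (intro exI[of _ "plug F (subst s 0 v)"] conjI)
        show "step (plug ?GA v) (plug F (subst s 0 v))" using s1 by (simp only: plug_ccomp plug.simps)
        show "\<forall>w. step (plug ?GA v) w \<longrightarrow> w = plug F (subst s 0 v)" using u by (simp only: plug_ccomp plug.simps)
        show "step\<^sup>*\<^sup>* (plug ?GB v) (plug F (subst s 0 v))" using s2 by (simp only: plug.simps r_into_rtranclp)
      qed
    qed
    then show ?thesis using h by simp
  qed
qed

lemma sim_RRi: "nf_sim RR\<inverse>\<inverse>"
  unfolding nf_sim_def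
proof (intro allI impI)
  fix a b a' assume r: "RR\<inverse>\<inverse> a b" and ev: "eval a a'"
  show "\<exists>b'. eval b b' \<and> nf_rel RR\<inverse>\<inverse> a' b'"
  proof (cases "a = b")
    case True
    have "nf_rel RR\<inverse>\<inverse> a' a'" by (rule nf_refl) (use ev in \<open>auto simp: RR_def eval_def irr_def\<close>)
    then show ?thesis using ev True by blast
  next
    case False
    then obtain F s u where h: "pure F" "b = plug F (App (Lam s) u)" "a = App (Lam (plug (liftc 0 F) s)) u"
      using r unfolding RR_def by auto
    let ?GB = "ccomp F (CAppR (Lam s) Hole)" and ?GA = "CAppR (Lam (plug (liftc 0 F) s)) Hole"
    have "\<exists>b'. eval (plug ?GB u) b' \<and> nf_rel RR\<inverse>\<inverse> a' b'"
    proof (rule sim_gen[where x=a])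
      fix w show "RR\<inverse>\<inverse> (plug ?GA w) (plug ?GB w)" unfolding RR_def conversep_iff
        by (intro disjI2 exI[of _ F] exI[of _ s] exI[of _ w] conjI) (simp_all add: h)
      show "\<And>t. RR\<inverse>\<inverse> t t" unfolding RR_def by auto
      show "pure ?GA" "pure ?GB" using h by auto
      show "step\<^sup>*\<^sup>* a a'" "irr a'" using ev unfolding eval_def irr_def by auto
      show "a = plug ?GA u" using h by simp
      fix v assume v: "is_val v"
      have s1: "step (plug F (App (Lam s) v)) (plug F (subst s 0 v))"
        using step.beta[of F v s] v h(1) pure_evctx by blast
      have s2: "step (App (Lam (plug (liftc 0 F) s)) v) (plug F (subst s 0 v))"
        using step.beta[of Hole v "plug (liftc 0 F) s"] v subst_key[of F s v] by simp
      have u: "\<forall>w. step (App (Lam (plug (liftc 0 F) s)) v) w \<longrightarrow> w = plug F (subst s 0 v)"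
        using step_beta_unique[of "plug (liftc 0 F) s" v] v subst_key[of F s v] by simp
      show "\<exists>c. step (plug ?GA v) c \<and> (\<forall>w. step (plug ?GA v) w \<longrightarrow> w = c) \<and> step\<^sup>*\<^sup>* (plug ?GB v) c"
      proof (intro exI[of _ "plug F (subst s 0 v)"] conjI)
        show "step (plug ?GA v) (plug F (subst s 0 v))" using s2 by (simp only: plug.simps)
        show "\<forall>w. step (plug ?GA v) w \<longrightarrow> w = plug F (subst s 0 v)" using u by (simp only: plug.simps)
        show "step\<^sup>*\<^sup>* (plug ?GB v) (plug F (subst s 0 v))" using s1 by (simp only: plug_ccomp plug.simps r_into_rtranclp)
      qed
    qed
    then show ?thesis using h by simp
  qed
qed

theorem proposition4:
  fixes F :: ctx and t0 t1 :: trm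
  assumes "pure F"
  shows "plug F (App (Lam t0) t1) \<approx>nf App (Lam (plug (liftc 0 F) t0)) t1"
  unfolding nf_bisimilar_def nf_bisim_def
  using sim_RR sim_RRi assms unfolding RR_def by blast

end
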